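(* Let $\pi=(\pi_n^{n+1}\colon(X_{n+1},f_{n+1})\to(X_n,f_n))_{n\ge1}$ be an inverse sequence of equivariant maps and let $(X,f)=\lim_\pi(X_n,f_n)$. Let $\mathcal{C}_\pi=\{(C_n)_{n\ge1}\in\prod_{n\ge1}\mathcal{C}(f_n):\pi_n^{n+1}(C_{n+1})\subset C_n\ \forall n\ge1\}$ and, for $C_\ast=(C_n)_{n\ge1}\in\mathcal{C}_\pi$, $[C_\ast]=\{x=(x_n)_{n\ge1}\in X:x_n\in C_n\ \forall n\ge1\}$. Then $\mathcal{C}(f)=\{[C_\ast]:C_\ast\in\mathcal{C}_\pi\}$.
   Context: Each $X_n$ is a compact metric space, $f_n$ a continuous self-map, $\pi_n^{n+1}\colon X_{n+1}\to X_n$ continuous with $f_n\circ\pi_n^{n+1}=\pi_n^{n+1}\circ f_{n+1}$. $X=\{(x_n)\in\prod_n X_n:\pi_n^{n+1}(x_{n+1})=x_n\ \forall n\}$ with the product topology and $f((x_n))=(f_n(x_n))$. For a continuous map $g$ of a compact metric space $(Y,d)$: a $\delta$-chain is a finite sequence $(y_i)_{i=0}^k$, $k>0$, with $d(g(y_i),y_{i+1})\le\delta$; write $y\to_{g,\delta}z$ if one exists from $y$ to $z$; $CR(g)=\{y:y\to_{g,\delta}y\ \forall\delta>0\}$; for $y,z\in CR(g)$, $y\leftrightarrow_g z$ iff $y\to_{g,\delta}z$ and $z\to_{g,\delta}y$ for all $\delta>0$; the equivalence classes of $\leftrightarrow_g$ are the chain components, and $\mathcal{C}(g)$ is the set of chain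 components. *)

theory Defs
  imports "HOL-Analysis.Analysis"
begin

definition chain_to :: "('b \<Rightarrow> 'b \<Rightarrow> real) \<Rightarrow> 'b set \<Rightarrow> ('b \<Rightarrow> 'b) \<Rightarrow> real \<Rightarrow> 'b \<Rightarrow> 'b \<Rightarrow> bool" where
  "chain_to d Y g \<delta> y z \<longleftrightarrow>
     (\<exists>k::nat. k > 0 \<and> (\<exists>s::nat \<Rightarrow> 'b. s 0 = y \<and> s k = z \<and> (\<forall>i\<le>k. s i \<in> Y)
        \<and> (\<forall>i<k. d (g (s i)) (s (Suc i)) \<le> \<delta>)))"

definition chain_recurrent :: "('b \<Rightarrow> 'b \<Rightarrow> real) \<Rightarrow> 'b set \<Rightarrow> ('b \<Rightarrow> 'b) \<Rightarrow> 'b set" where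
  "chain_recurrent d Y g = {y \<in> Y. \<forall>\<delta>>0. chain_to d Y g \<delta> y y}"

definition chain_equiv :: "('b \<Rightarrow> 'b \<Rightarrow> real) \<Rightarrow> 'b set \<Rightarrow> ('b \<Rightarrow> 'b) \<Rightarrow> 'b \<Rightarrow> 'b \<Rightarrow> bool" where
  "chain_equiv d Y g y z \<longleftrightarrow> y \<in> chain_recurrent d Y g \<and> z \<in> chain_recurrent d Y g \<and>
     (\<forall>\<delta>>0. chain_to d Y g \<delta> y z \<and> chain_to d Y g \<delta> z y)"

definition chain_components :: "('b \<Rightarrow> 'b \<Rightarrow> real) \<Rightarrow> 'b set \<Rightarrow> ('b \<Rightarrow> 'b) \<Rightarrow> 'b set set" where
  "chain_components d Y g = {{z. chain_equiv d Y g y z} | y. y \<in> chain_recurrent d Y g}"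

definition inv_limit :: "(nat \<Rightarrow> 'a set) \<Rightarrow> (nat \<Rightarrow> 'a \<Rightarrow> 'a) \<Rightarrow> (nat \<Rightarrow> 'a) set" where
  "inv_limit X p = {x. (\<forall>n. x n \<in> X n) \<and> (\<forall>n. p n (x (Suc n)) = x n)}"

text \<open>Standard metric inducing the product topology on sequences.\<close>

definition prod_dist :: "(nat \<Rightarrow> 'a::metric_space) \<Rightarrow> (nat \<Rightarrow> 'a) \<Rightarrow> real" where
  "prod_dist x y = (\<Sum>n. min 1 (dist (x n) (y n)) / 2 ^ Suc n)"

definition induced_map :: "(nat \<Rightarrow> 'a \<Rightarrow> 'a) \<Rightarrow> (nat \<Rightarrow> 'a) \<Rightarrow> (nat \<Rightarrow> 'a)" where
  "induced_map f x = (\<lambda>n. f n (x n))"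

definition compatible_components ::
  "(nat \<Rightarrow> 'a::metric_space set) \<Rightarrow> (nat \<Rightarrow> 'a \<Rightarrow> 'a) \<Rightarrow> (nat \<Rightarrow> 'a \<Rightarrow> 'a) \<Rightarrow> (nat \<Rightarrow> 'a set) set" where
  "compatible_components X f p =
     {C. (\<forall>n. C n \<in> chain_components dist (X n) (f n)) \<and> (\<forall>n. p n ` C (Suc n) \<subseteq> C n)}"

definition thread_set :: "(nat \<Rightarrow> 'a set) \<Rightarrow> (nat \<Rightarrow> 'a \<Rightarrow> 'a) \<Rightarrow> (nat \<Rightarrow> 'a set) \<Rightarrow> (nat \<Rightarrow> 'a) set" where
  "thread_set X p C = {x \<in> inv_limit X p. \<forall>n. x n \<in> C n}"

end

theory Submission
  imports Defs "HOL-Library.Diagonal_Subsequence"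
begin


lemma chain_to_mono:
  assumes "chain_to d Y g \<delta> a b" "\<delta> \<le> \<delta>'"
  shows "chain_to d Y g \<delta>' a b"
  using assms unfolding chain_to_def by (blast intro: order_trans)

lemma chain_to_in:
  assumes "chain_to d Y g \<delta> a b"
  shows "a \<in> Y" "b \<in> Y"
  using assms unfolding chain_to_def by (metis le0, metis order_refl)

lemma chain_to_trans:
  assumes "chain_to d Y g \<delta> a b" "chain_to d Y g \<delta> b c"
  shows "chain_to d Y g \<delta> a c"
proof -
  obtain k s where k: "k > 0" "s 0 = a" "s k = b" "\<forall>i\<le>k. s i \<in> Y"
    "\<forall>i<k. d (g (s i)) (s (Suc i)) \<le> \<delta>"
    using assms(1) unfolding chain_to_def by blast
  obtain l t where l: "l > 0" "t 0 = b" "t l = c" "\<forall>i\<le>l. t i \<in> Y"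
    "\<forall>i<l. d (g (t i)) (t (Suc i)) \<le> \<delta>"
    using assms(2) unfolding chain_to_def by blast
  define u where "u i = (if i \<le> k then s i else t (i - k))" for i
  have "u 0 = a" using k by (simp add: u_def)
  moreover have "u (k + l) = c" using l k by (simp add: u_def)
  moreover have "\<forall>i\<le>k+l. u i \<in> Y"
    using k l by (auto simp: u_def)
  moreover have "\<forall>i<k+l. d (g (u i)) (u (Suc i)) \<le> \<delta>"
  proof (intro allI impI)
    fix i assume i: "i < k + l"
    show "d (g (u i)) (u (Suc i)) \<le> \<delta>"
    proof (cases "i < k")
      case True then show ?thesis using k by (simp add: u_def)
    next
      case False
      then have "Suc i - k = Suc (i - k)" by simp
      then show ?thesis using False i l k
        by (cases "i = k") (auto simp: u_def)
    qed
  qed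
  ultimately show ?thesis unfolding chain_to_def using k l
    by (intro exI[of _ "k+l"]) auto
qed

lemma chain_equiv_sym: "chain_equiv d Y g a b \<Longrightarrow> chain_equiv d Y g b a"
  unfolding chain_equiv_def by blast

lemma chain_equiv_trans: "chain_equiv d Y g a b \<Longrightarrow> chain_equiv d Y g b c \<Longrightarrow> chain_equiv d Y g a c"
  unfolding chain_equiv_def using chain_to_trans by metis

lemma chain_equiv_refl: "a \<in> chain_recurrent d Y g \<Longrightarrow> chain_equiv d Y g a a"
  unfolding chain_equiv_def chain_recurrent_def by blast

lemma chain_equiv_CR: "chain_equiv d Y g a b \<Longrightarrow> a \<in> chain_recurrent d Y g \<and> b \<in> chain_recurrent d Y g"
  unfolding chain_equiv_def by blast

lemma chain_to_replace_last:
  fixes g :: "'a::metric_space \<Rightarrow> 'a"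
  assumes "chain_to dist Y g \<delta>1 a b" "z \<in> Y" "dist b z \<le> \<delta>2"
  shows "chain_to dist Y g (\<delta>1 + \<delta>2) a z"
proof -
  obtain k s where k: "k > 0" "s 0 = a" "s k = b" "\<forall>i\<le>k. s i \<in> Y"
    "\<forall>i<k. dist (g (s i)) (s (Suc i)) \<le> \<delta>1"
    using assms(1) unfolding chain_to_def by blast
  have d2: "\<delta>2 \<ge> 0" using assms(3) zero_le_dist order_trans by blast
  define u where "u = s(k := z)"
  have "\<forall>i<k. dist (g (u i)) (u (Suc i)) \<le> \<delta>1 + \<delta>2"
  proof (intro allI impI)
    fix i assume i: "i < k"
    show "dist (g (u i)) (u (Suc i)) \<le> \<delta>1 + \<delta>2"
    proof (cases "Suc i = k")
      case True
      then have "dist (g (u i)) (u (Suc i)) = dist (g (s i)) z" using i by (simp add: u_def)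
      also have "\<dots> \<le> dist (g (s i)) b + dist b z" by (rule dist_triangle)
      also have "\<dots> \<le> \<delta>1 + \<delta>2" using k(3,5) True i assms(3) by (metis add_mono)
      finally show ?thesis .
    next
      case False then show ?thesis using i k d2 by (simp add: u_def) (smt (verit))
    qed
  qed
  then show ?thesis unfolding chain_to_def using k assms(2)
    by (intro exI[of _ k] conjI exI[of _ u]) (auto simp: u_def)
qed

lemma chain_to_replace_first:
  fixes g :: "'a::metric_space \<Rightarrow> 'a"
  assumes "chain_to dist Y g \<delta>1 b c" "z \<in> Y" "dist (g z) (g b) \<le> \<delta>2"
  shows "chain_to dist Y g (\<delta>1 + \<delta>2) z c"
proof -
  obtain k s where k: "k > 0" "s 0 = b" "s k = c" "\<forall>i\<le>k. s i \<in> Y"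
    "\<forall>i<k. dist (g (s i)) (s (Suc i)) \<le> \<delta>1"
    using assms(1) unfolding chain_to_def by blast
  have d2: "\<delta>2 \<ge> 0" using assms(3) zero_le_dist order_trans by blast
  define u where "u = s(0 := z)"
  have "\<forall>i<k. dist (g (u i)) (u (Suc i)) \<le> \<delta>1 + \<delta>2"
  proof (intro allI impI)
    fix i assume i: "i < k"
    show "dist (g (u i)) (u (Suc i)) \<le> \<delta>1 + \<delta>2"
    proof (cases "i = 0")
      case True
      then have "dist (g (u i)) (u (Suc i)) = dist (g z) (s 1)" by (simp add: u_def)
      also have "\<dots> \<le> dist (g z) (g b) + dist (g b) (s 1)" by (rule dist_triangle)
      also have "\<dots> \<le> \<delta>2 + \<delta>1" using k(2,5) True i assms(3) by (metis One_nat_def add_mono)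
      finally show ?thesis by simp
    next
      case False then show ?thesis using i k d2 by (simp add: u_def) (smt (verit))
    qed
  qed
  then show ?thesis unfolding chain_to_def using k assms(2)
    by (intro exI[of _ k] conjI exI[of _ u]) (auto simp: u_def)
qed


lemma pd_term_bounds:
  fixes u v :: "nat \<Rightarrow> 'a::metric_space"
  shows "0 \<le> min 1 (dist (u n) (v n)) / 2 ^ Suc n"
    "min 1 (dist (u n) (v n)) / 2 ^ Suc n \<le> (1/2) ^ Suc n"
  by (auto simp: divide_simps)

lemma pd_summable:
  fixes u v :: "nat \<Rightarrow> 'a::metric_space"
  shows "summable (\<lambda>n. min 1 (dist (u n) (v n)) / 2 ^ Suc n)"
proof (rule summable_comparison_test)
  show "\<exists>N. \<forall>n\<ge>N. norm (min 1 (dist (u n) (v n)) / 2 ^ Suc n) \<le> (1/2) ^ Suc n"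
    using pd_term_bounds by auto
  show "summable (\<lambda>n. (1/2::real) ^ Suc n)"
    by (simp add: summable_geometric summable_mult)
qed

lemma pd_coord:
  fixes u v :: "nat \<Rightarrow> 'a::metric_space"
  assumes "prod_dist u v < (1/2) ^ Suc n"
  shows "dist (u n) (v n) \<le> 2 ^ Suc n * prod_dist u v"
proof -
  have "sum (\<lambda>n. min 1 (dist (u n) (v n)) / 2 ^ Suc n) {n} \<le> prod_dist u v"
    unfolding prod_dist_def
    by (rule sum_le_suminf[OF pd_summable]) (auto intro: pd_term_bounds)
  then have "min 1 (dist (u n) (v n)) / 2 ^ Suc n \<le> prod_dist u v" by simp
  moreover have "dist (u n) (v n) < 1"
  proof (rule ccontr)
    assume "\<not> ?thesis"
    then have "min 1 (dist (u n) (v n)) / 2 ^ Suc n = (1/2) ^ Suc n"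
      by (simp add: power_one_over)
    with calculation assms show False by simp
  qed
  ultimately show ?thesis by (simp add: divide_simps mult.commute)
qed

lemma pd_bound:
  fixes u v :: "nat \<Rightarrow> 'a::metric_space"
  shows "prod_dist u v \<le> (\<Sum>n<N. dist (u n) (v n)) + (1/2) ^ N"
proof -
  let ?g = "\<lambda>n. min 1 (dist (u n) (v n)) / 2 ^ Suc n"
  have "prod_dist u v = (\<Sum>n. ?g (n + N)) + (\<Sum>n<N. ?g n)"
    unfolding prod_dist_def by (rule suminf_split_initial_segment[OF pd_summable])
  moreover have "(\<Sum>n<N. ?g n) \<le> (\<Sum>n<N. dist (u n) (v n))"
  proof (rule sum_mono)
    fix n
    have "(1::real) \<le> 2 ^ Suc n" by (rule one_le_power) simp
    then have "?g n \<le> min 1 (dist (u n) (v n))"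
      by (simp add: divide_le_eq mult_le_cancel_left1 min_le_iff_disj)
    also have "\<dots> \<le> dist (u n) (v n)" by simp
    finally show "?g n \<le> dist (u n) (v n)" .
  qed
  moreover have "(\<Sum>n. ?g (n + N)) \<le> (\<Sum>n. (1/2) ^ N * (1/2) ^ Suc n)"
  proof (rule suminf_le)
    fix n show "?g (n + N) \<le> (1/2) ^ N * (1/2) ^ Suc n"
      using pd_term_bounds(2)[where u=u and v=v and n="n + N"] by (simp add: power_add mult.commute)
    show "summable (\<lambda>n. ?g (n + N))" using pd_summable[of u v] summable_iff_shift[where f="?g" and k=N] by simp
    show "summable (\<lambda>n. (1/2::real) ^ N * (1/2) ^ Suc n)"
      by (simp add: summable_geometric summable_mult)
  qed
  moreover have "(\<Sum>n. (1/2::real) ^ N * (1/2) ^ Suc n) = (1/2) ^ N"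
  proof -
    have "(\<Sum>n. (1/2::real) ^ N * (1/2) ^ Suc n) = (1/2) ^ N * (1/2) * (\<Sum>n. (1/2) ^ n)"
      by (subst suminf_mult[symmetric]) (auto simp: summable_geometric mult.assoc)
    also have "\<dots> = (1/2) ^ N" by (simp add: suminf_geometric)
    finally show ?thesis .
  qed
  ultimately show ?thesis by linarith
qed


lemma CE_closed:
  fixes g :: "'a::metric_space \<Rightarrow> 'a"
  assumes Y: "compact Y" and g: "continuous_on Y g"
    and z: "\<And>m. chain_equiv dist Y g a (z m)" and lim: "z \<longlonglongrightarrow> l"
  shows "chain_equiv dist Y g a l"
proof -
  have zY: "z m \<in> Y" for m using z[of m] unfolding chain_equiv_def chain_recurrent_def by blast
  have lY: "l \<in> Y"
    using compact_imp_closed[OF Y] lim zY closed_sequentially by blast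
  have aCR: "a \<in> chain_recurrent dist Y g" using z[of 0] unfolding chain_equiv_def by blast
  have both: "chain_to dist Y g \<delta> a l \<and> chain_to dist Y g \<delta> l a" if "\<delta> > 0" for \<delta>
  proof -
    obtain \<sigma> where \<sigma>: "\<sigma> > 0" "\<forall>x'\<in>Y. dist x' l < \<sigma> \<longrightarrow> dist (g x') (g l) < \<delta>/2"
      using g lY \<open>\<delta> > 0\<close> unfolding continuous_on_iff by (meson half_gt_zero)
    have "min \<sigma> (\<delta>/2) > 0" using \<sigma> \<open>\<delta>>0\<close> by simp
    then obtain m where m: "dist (z m) l < min \<sigma> (\<delta>/2)"
      using lim unfolding lim_sequentially by blast
    have c1: "chain_to dist Y g (\<delta>/2) a (z m)" and c2: "chain_to dist Y g (\<delta>/2) (z m) a"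
      using z[of m] \<open>\<delta>>0\<close> unfolding chain_equiv_def by auto
    have "chain_to dist Y g (\<delta>/2 + \<delta>/2) a l"
      by (rule chain_to_replace_last[OF c1 lY]) (use m in simp)
    moreover have "chain_to dist Y g (\<delta>/2 + \<delta>/2) l a"
      by (rule chain_to_replace_first[OF c2 lY]) (use m \<sigma> zY in \<open>auto simp: dist_commute\<close>)
    ultimately show ?thesis by simp
  qed
  have "chain_to dist Y g \<delta> l l" if "\<delta> > 0" for \<delta>
    using both[OF that] chain_to_trans[of dist Y g \<delta> l a l] by blast
  then have "l \<in> chain_recurrent dist Y g"
    unfolding chain_recurrent_def using lY by blast
  then show ?thesis unfolding chain_equiv_def using aCR both by blast
qed

lemma diag_limit:
  fixes z :: "nat \<Rightarrow> nat \<Rightarrow> 'a::metric_space"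
  assumes K: "\<And>j. compact (K j)" and zK: "\<And>m j. z m j \<in> K j"
  shows "\<exists>r w. strict_mono r \<and> (\<forall>j. w j \<in> K j \<and> (\<lambda>m. z (r m) j) \<longlonglongrightarrow> w j)"
proof -
  interpret subseqs "\<lambda>n s. \<exists>l. (\<lambda>i. z (s i) n) \<longlonglongrightarrow> l"
  proof
    fix n and s :: "nat \<Rightarrow> nat"
    assume "strict_mono s"
    have "seq_compact (K n)" by (rule compact_imp_seq_compact[OF K])
    moreover have "\<forall>i. z (s i) n \<in> K n" using zK by simp
    ultimately obtain l r where "l \<in> K n" "strict_mono (r :: nat \<Rightarrow> nat)" "((\<lambda>i. z (s i) n) \<circ> r) \<longlonglongrightarrow> l"
      by (rule seq_compactE)
    then show "\<exists>r'. strict_mono r' \<and> (\<exists>l. (\<lambda>i. z ((s \<circ> r') i) n) \<longlonglongrightarrow> l)"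
      by (auto simp: o_def)
  qed
  have conv: "\<exists>l. (\<lambda>i. z (diagseq i) n) \<longlonglongrightarrow> l" for n
  proof -
    obtain l where "(\<lambda>i. z ((diagseq o (+) (Suc n)) i) n) \<longlonglongrightarrow> l"
    proof (atomize_elim, rule diagseq_holds)
      fix r s n
      assume "strict_mono (r :: nat \<Rightarrow> nat)"
      assume "\<exists>l. (\<lambda>i. z (s i) n) \<longlonglongrightarrow> l"
      then obtain l where "((\<lambda>i. z i n) o s) \<longlonglongrightarrow> l"
        by (auto simp: o_def)
      hence "((\<lambda>i. z i n) o s o r) \<longlonglongrightarrow> l" using \<open>strict_mono r\<close>
        by (rule LIMSEQ_subseq_LIMSEQ)
      thus "\<exists>l. (\<lambda>i. z ((s \<circ> r) i) n) \<longlonglongrightarrow> l" by (auto simp add: o_def)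
    qed
    hence "(\<lambda>i. z (diagseq (i + Suc n)) n) \<longlonglongrightarrow> l" by (simp add: ac_simps)
    hence "(\<lambda>i. z (diagseq i) n) \<longlonglongrightarrow> l" by (rule LIMSEQ_offset)
    thus ?thesis ..
  qed
  define w where "w n = lim (\<lambda>i. z (diagseq i) n)" for n
  have wl: "(\<lambda>i. z (diagseq i) n) \<longlonglongrightarrow> w n" for n
  proof -
    obtain l where L: "(\<lambda>i. z (diagseq i) n) \<longlonglongrightarrow> l" using conv[of n] by blast
    have "w n = l" unfolding w_def using limI[OF L] .
    then show ?thesis using L by simp
  qed
  have wK: "w n \<in> K n" for n
  proof (rule closed_sequentially[OF compact_imp_closed[OF K] _ wl])
    show "z (diagseq i) n \<in> K n" for i using zK by simp
  qed
  show ?thesis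
    by (rule exI[of _ diagseq], rule exI[of _ w]) (simp add: wK wl subseq_diagseq)
qed

fun prj :: "(nat \<Rightarrow> 'a \<Rightarrow> 'a) \<Rightarrow> nat \<Rightarrow> nat \<Rightarrow> 'a \<Rightarrow> 'a" where
  "prj p j 0 a = a"
| "prj p j (Suc d) a = p j (prj p (Suc j) d a)"

locale invsys =
  fixes X :: "nat \<Rightarrow> 'a::metric_space set"
    and f p :: "nat \<Rightarrow> 'a \<Rightarrow> 'a"
  assumes cpt: "\<And>n. compact (X n)"
    and fcont: "\<And>n. continuous_on (X n) (f n)"
    and fin: "\<And>n. f n ` X n \<subseteq> X n"
    and pcont: "\<And>n. continuous_on (X (Suc n)) (p n)"
    and pin: "\<And>n. p n ` X (Suc n) \<subseteq> X n"
    and equiv: "\<And>n x. x \<in> X (Suc n) \<Longrightarrow> f n (p n x) = p n (f (Suc n) x)"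
begin

lemma prj_in: "a \<in> X (j + d) \<Longrightarrow> prj p j d a \<in> X j"
proof (induction d arbitrary: j)
  case 0 then show ?case by simp
next
  case (Suc d)
  have "prj p (Suc j) d a \<in> X (Suc j)" using Suc by simp
  then show ?case using pin by auto
qed

lemma prj_cont: "continuous_on (X (j + d)) (prj p j d)"
proof (induction d arbitrary: j)
  case 0 then show ?case by (simp add: continuous_on_id')
next
  case (Suc d)
  have "continuous_on (X (Suc j + d)) (\<lambda>a. p j (prj p (Suc j) d a))"
    by (rule continuous_on_compose2[OF pcont Suc.IH]) (use prj_in in auto)
  then show ?case by simp
qed

lemma prj_equiv: "a \<in> X (j + d) \<Longrightarrow> f j (prj p j d a) = prj p j d (f (j + d) a)"
proof (induction d arbitrary: j)
  case 0 then show ?case by simp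
next
  case (Suc d)
  have a: "a \<in> X (Suc j + d)" using Suc.prems by simp
  have "f j (prj p j (Suc d) a) = p j (f (Suc j) (prj p (Suc j) d a))"
    using equiv prj_in[OF a] by simp
  also have "\<dots> = p j (prj p (Suc j) d (f (Suc j + d) a))" using Suc.IH[OF a] by simp
  finally show ?case by simp
qed

lemma prj_thread: "x \<in> inv_limit X p \<Longrightarrow> prj p j d (x (j + d)) = x j"
proof (induction d arbitrary: j)
  case 0 then show ?case by simp
next
  case (Suc d)
  have "prj p (Suc j) d (x (Suc j + d)) = x (Suc j)" using Suc by blast
  then show ?case using Suc.prems by (simp add: inv_limit_def)
qed

lemma prj_in': "j \<le> M \<Longrightarrow> a \<in> X M \<Longrightarrow> prj p j (M - j) a \<in> X j"
  using prj_in[of a j "M - j"] by simp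

lemma prj_equiv': "j \<le> M \<Longrightarrow> a \<in> X M \<Longrightarrow> f j (prj p j (M - j) a) = prj p j (M - j) (f M a)"
  using prj_equiv[of a j "M - j"] by simp

lemma prj_thread': "x \<in> inv_limit X p \<Longrightarrow> j \<le> M \<Longrightarrow> prj p j (M - j) (x M) = x j"
  using prj_thread[of x j "M - j"] by simp

lemma prj_ucont': "j \<le> M \<Longrightarrow> uniformly_continuous_on (X M) (prj p j (M - j))"
  using compact_uniformly_continuous[OF prj_cont[of j "M - j"] cpt] by simp

lemma prj_step: "Suc j \<le> M \<Longrightarrow> p j (prj p (Suc j) (M - Suc j) a) = prj p j (M - j) a"
  by (metis Suc_diff_le diff_Suc_Suc prj.simps(2))

end


context invsys
begin

lemma thread_limit:
  assumes zX: "\<And>m j. z m j \<in> X j"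
    and ev: "\<And>j. eventually (\<lambda>m. p j (z m (Suc j)) = z m j) sequentially"
  shows "\<exists>r w. strict_mono r \<and> w \<in> inv_limit X p \<and> (\<forall>j. (\<lambda>m. z (r m) j) \<longlonglongrightarrow> w j)"
proof -
  obtain r w where r: "strict_mono r" and wX: "\<And>j. w j \<in> X j" and wl: "\<And>j. (\<lambda>m. z (r m) j) \<longlonglongrightarrow> w j"
    using diag_limit[of X z, OF cpt zX] by blast
  have "p j (w (Suc j)) = w j" for j
  proof -
    have 1: "(\<lambda>m. p j (z (r m) (Suc j))) \<longlonglongrightarrow> p j (w (Suc j))"
      by (rule continuous_on_tendsto_compose[OF pcont wl wX]) (simp add: zX)
    have 2: "eventually (\<lambda>m. p j (z (r m) (Suc j)) = z (r m) j) sequentially"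
      using eventually_compose_filterlim[OF ev filterlim_subseq[OF r]] .
    have "(\<lambda>m. z (r m) j) \<longlonglongrightarrow> p j (w (Suc j))" using Lim_transform_eventually[OF 1 2] .
    then show ?thesis using wl[of j] LIMSEQ_unique by blast
  qed
  then have "w \<in> inv_limit X p" unfolding inv_limit_def using wX by blast
  then show ?thesis using r wl by blast
qed

lemma chain_proj:
  assumes "chain_to prod_dist (inv_limit X p) (induced_map f) \<delta> x y" "\<delta> < (1/2) ^ Suc n"
  shows "chain_to dist (X n) (f n) (2 ^ Suc n * \<delta>) (x n) (y n)"
proof -
  obtain k s where k: "k > 0" "s 0 = x" "s k = y" "\<forall>i\<le>k. s i \<in> inv_limit X p"
    "\<forall>i<k. prod_dist (induced_map f (s i)) (s (Suc i)) \<le> \<delta>"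
    using assms(1) unfolding chain_to_def by blast
  have "\<forall>i<k. dist (f n (s i n)) (s (Suc i) n) \<le> 2 ^ Suc n * \<delta>"
  proof (intro allI impI)
    fix i assume i: "i < k"
    have le: "prod_dist (induced_map f (s i)) (s (Suc i)) \<le> \<delta>" using k i by blast
    then have "dist (induced_map f (s i) n) (s (Suc i) n) \<le> 2 ^ Suc n * prod_dist (induced_map f (s i)) (s (Suc i))"
      using assms(2) by (intro pd_coord) simp
    also have "\<dots> \<le> 2 ^ Suc n * \<delta>" using le by (intro mult_left_mono) simp_all
    finally show "dist (f n (s i n)) (s (Suc i) n) \<le> 2 ^ Suc n * \<delta>" by (simp add: induced_map_def)
  qed
  moreover have "\<forall>i\<le>k. s i n \<in> X n" using k(4) by (simp add: inv_limit_def)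
  ultimately show ?thesis unfolding chain_to_def using k
    by (intro exI[of _ k] conjI exI[of _ "\<lambda>i. s i n"]) auto
qed

lemma chain_proj_all:
  assumes "\<And>\<delta>. \<delta> > 0 \<Longrightarrow> chain_to prod_dist (inv_limit X p) (induced_map f) \<delta> x y" "\<epsilon> > 0"
  shows "chain_to dist (X n) (f n) \<epsilon> (x n) (y n)"
proof -
  define \<delta> where "\<delta> = min (\<epsilon> / 2 ^ Suc n) ((1/2) ^ Suc n / 2)"
  have d0: "\<delta> > 0" using assms(2) by (simp add: \<delta>_def)
  have d1: "\<delta> < (1/2) ^ Suc n"
  proof -
    have "\<delta> \<le> (1/2) ^ Suc n / 2" unfolding \<delta>_def by (rule min.cobounded2)
    moreover have "(1/2::real) ^ Suc n > 0" by simp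
    ultimately show ?thesis by linarith
  qed
  have d2: "2 ^ Suc n * \<delta> \<le> \<epsilon>"
  proof -
    have "2 ^ Suc n * \<delta> \<le> 2 ^ Suc n * (\<epsilon> / 2 ^ Suc n)"
      unfolding \<delta>_def by (intro mult_left_mono) auto
    then show ?thesis by simp
  qed
  show ?thesis using chain_to_mono[OF chain_proj[OF assms(1)[OF d0] d1] d2] .
qed

lemma chain_map_p:
  assumes "\<And>\<epsilon>. \<epsilon> > 0 \<Longrightarrow> chain_to dist (X (Suc n)) (f (Suc n)) \<epsilon> a b" "\<eta> > 0"
  shows "chain_to dist (X n) (f n) \<eta> (p n a) (p n b)"
proof -
  have "uniformly_continuous_on (X (Suc n)) (p n)"
    by (rule compact_uniformly_continuous[OF pcont cpt])
  then obtain \<sigma> where \<sigma>: "\<sigma> > 0" "\<forall>x\<in>X (Suc n). \<forall>x'\<in>X (Suc n). dist x' x < \<sigma> \<longrightarrow> dist (p n x') (p n x) < \<eta>"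
    using assms(2) unfolding uniformly_continuous_on_def by blast
  obtain k s where k: "k > 0" "s 0 = a" "s k = b" "\<forall>i\<le>k. s i \<in> X (Suc n)"
    "\<forall>i<k. dist (f (Suc n) (s i)) (s (Suc i)) \<le> \<sigma>/2"
    using assms(1)[of "\<sigma>/2"] \<sigma>(1) unfolding chain_to_def by auto
  have "\<forall>i<k. dist (f n (p n (s i))) (p n (s (Suc i))) \<le> \<eta>"
  proof (intro allI impI)
    fix i assume i: "i < k"
    have si: "s i \<in> X (Suc n)" "s (Suc i) \<in> X (Suc n)" using k i by auto
    then have fsi: "f (Suc n) (s i) \<in> X (Suc n)" using fin by blast
    have "dist (f (Suc n) (s i)) (s (Suc i)) < \<sigma>" using k(5) i \<sigma>(1) by force
    then have "dist (p n (f (Suc n) (s i))) (p n (s (Suc i))) < \<eta>" using \<sigma>(2) si fsi by blast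
    then show "dist (f n (p n (s i))) (p n (s (Suc i))) \<le> \<eta>" using equiv[OF si(1)] by simp
  qed
  moreover have "\<forall>i\<le>k. p n (s i) \<in> X n" using k(4) pin by blast
  ultimately show ?thesis unfolding chain_to_def using k
    by (intro exI[of _ k] conjI exI[of _ "\<lambda>i. p n (s i)"]) auto
qed

lemma CE_p:
  assumes "chain_equiv dist (X (Suc n)) (f (Suc n)) a b"
  shows "chain_equiv dist (X n) (f n) (p n a) (p n b)"
proof -
  have aa: "\<And>\<epsilon>. \<epsilon> > 0 \<Longrightarrow> chain_to dist (X (Suc n)) (f (Suc n)) \<epsilon> a a"
    and bb: "\<And>\<epsilon>. \<epsilon> > 0 \<Longrightarrow> chain_to dist (X (Suc n)) (f (Suc n)) \<epsilon> b b"
    and ab: "\<And>\<epsilon>. \<epsilon> > 0 \<Longrightarrow> chain_to dist (X (Suc n)) (f (Suc n)) \<epsilon> a b"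
    and ba: "\<And>\<epsilon>. \<epsilon> > 0 \<Longrightarrow> chain_to dist (X (Suc n)) (f (Suc n)) \<epsilon> b a"
    using assms unfolding chain_equiv_def chain_recurrent_def by auto
  have "p n a \<in> X n" "p n b \<in> X n"
    using assms pin unfolding chain_equiv_def chain_recurrent_def by auto
  then show ?thesis
    unfolding chain_equiv_def chain_recurrent_def
    using chain_map_p[OF aa] chain_map_p[OF bb] chain_map_p[OF ab] chain_map_p[OF ba] by blast
qed

lemma approx:
  assumes x0: "x0 \<in> inv_limit X p" and \<rho>: "\<rho> > 0"
  shows "\<exists>d. \<forall>s\<in>X (N + d). \<exists>e\<in>inv_limit X p. dist (prj p N d s) (e N) < \<rho>"
proof (rule ccontr)
  assume "\<not> ?thesis"
  then have "\<forall>d. \<exists>s\<in>X (N + d). \<forall>e\<in>inv_limit X p. \<not> dist (prj p N d s) (e N) < \<rho>" by blast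
  then obtain S where S: "\<And>d. S d \<in> X (N + d)"
    "\<And>d e. e \<in> inv_limit X p \<Longrightarrow> \<not> dist (prj p N d (S d)) (e N) < \<rho>" by metis
  define z where "z d j = (if j \<le> N + d then prj p j (N + d - j) (S d) else x0 j)" for d j
  have zX: "z d j \<in> X j" for d j
    using prj_in'[OF _ S(1)] x0 by (auto simp: z_def inv_limit_def)
  have ev: "eventually (\<lambda>d. p j (z d (Suc j)) = z d j) sequentially" for j
  proof (rule eventually_sequentiallyI[of "Suc j"])
    fix d assume "Suc j \<le> d"
    then have "Suc j \<le> N + d" by simp
    then show "p j (z d (Suc j)) = z d j" unfolding z_def using prj_step by simp
  qed
  obtain r w where r: "strict_mono r" and w: "w \<in> inv_limit X p" and wl: "\<And>j. (\<lambda>m. z (r m) j) \<longlonglongrightarrow> w j"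
    using thread_limit[OF zX ev] by blast
  obtain m where "dist (z (r m) N) (w N) < \<rho>"
    using wl[of N] \<rho> unfolding lim_sequentially by blast
  moreover have "z (r m) N = prj p N (r m) (S (r m))" by (simp add: z_def)
  ultimately show False using S(2)[OF w] by metis
qed

lemma ucont_fin:
  assumes "\<theta> > 0"
  shows "\<exists>\<rho>>0. \<forall>n<N. \<forall>a\<in>X N. \<forall>b\<in>X N. dist a b < \<rho> \<longrightarrow> dist (prj p n (N - n) a) (prj p n (N - n) b) < \<theta>"
proof -
  have "\<forall>n. \<exists>\<rho>. n < N \<longrightarrow> \<rho> > 0 \<and> (\<forall>a\<in>X N. \<forall>b\<in>X N. dist a b < \<rho> \<longrightarrow> dist (prj p n (N - n) a) (prj p n (N - n) b) < \<theta>)"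
  proof
    fix n
    show "\<exists>\<rho>. n < N \<longrightarrow> \<rho> > 0 \<and> (\<forall>a\<in>X N. \<forall>b\<in>X N. dist a b < \<rho> \<longrightarrow> dist (prj p n (N - n) a) (prj p n (N - n) b) < \<theta>)"
    proof (cases "n < N")
      case True
      then have "uniformly_continuous_on (X N) (prj p n (N - n))" by (intro prj_ucont') simp
      then obtain \<rho> where "\<rho> > 0" "\<forall>x\<in>X N. \<forall>x'\<in>X N. dist x' x < \<rho> \<longrightarrow> dist (prj p n (N - n) x') (prj p n (N - n) x) < \<theta>"
        using assms unfolding uniformly_continuous_on_def by blast
      then show ?thesis by blast
    qed simp
  qed
  then obtain R where R: "\<And>n. n < N \<Longrightarrow> R n > 0 \<and> (\<forall>a\<in>X N. \<forall>b\<in>X N. dist a b < R n \<longrightarrow> dist (prj p n (N - n) a) (prj p n (N - n) b) < \<theta>)"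
    by metis
  define \<rho> where "\<rho> = Min (insert 1 (R ` {..<N}))"
  have "\<rho> > 0" unfolding \<rho>_def using R by (simp add: Min_gr_iff)
  moreover have "\<rho> \<le> R n" if "n < N" for n unfolding \<rho>_def using that by (intro Min_le) auto
  ultimately show ?thesis using R by (meson order_less_le_trans)
qed

end


context invsys
begin

lemma chain_lift:
  assumes x: "x \<in> inv_limit X p" and y: "y \<in> inv_limit X p"
    and H: "\<And>n \<epsilon>. \<epsilon> > 0 \<Longrightarrow> chain_to dist (X n) (f n) \<epsilon> (x n) (y n)"
    and \<delta>: "\<delta> > 0"
  shows "chain_to prod_dist (inv_limit X p) (induced_map f) \<delta> x y"
proof -
  let ?XX = "inv_limit X p"
  obtain N0 where N0: "(1/2::real) ^ N0 < \<delta>/2"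
    using real_arch_pow_inv[of "\<delta>/2" "1/2::real"] \<delta> by auto
  define N where "N = Suc N0"
  have Npos: "N > 0" by (simp add: N_def)
  have halfN: "(1/2::real) ^ N < \<delta>/2"
  proof -
    have "(1/2::real) ^ N \<le> (1/2) ^ N0" unfolding N_def by (intro power_decreasing) auto
    then show ?thesis using N0 by linarith
  qed
  define \<theta> where "\<theta> = \<delta> / (2 * real N)"
  have \<theta>: "\<theta> > 0" using \<delta> Npos by (simp add: \<theta>_def)
  let ?G = "\<lambda>n. prj p n (N - n)"
  obtain \<rho>1 where \<rho>1: "\<rho>1 > 0"
    "\<forall>n<N. \<forall>a\<in>X N. \<forall>b\<in>X N. dist a b < \<rho>1 \<longrightarrow> dist (?G n a) (?G n b) < \<theta>/3"
    using ucont_fin[of "\<theta>/3" N] \<theta> by auto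
  have "uniformly_continuous_on (X N) (f N)" by (rule compact_uniformly_continuous[OF fcont cpt])
  then obtain \<rho>2 where \<rho>2: "\<rho>2 > 0" "\<forall>x\<in>X N. \<forall>x'\<in>X N. dist x' x < \<rho>2 \<longrightarrow> dist (f N x') (f N x) < \<rho>1"
    using \<rho>1(1) unfolding uniformly_continuous_on_def by blast
  define \<rho> where "\<rho> = min \<rho>1 \<rho>2"
  have \<rho>: "\<rho> > 0" using \<rho>1 \<rho>2 by (simp add: \<rho>_def)
  obtain d where D: "\<forall>s\<in>X (N + d). \<exists>e\<in>?XX. dist (prj p N d s) (e N) < \<rho>"
    using approx[OF x \<rho>] by blast
  then obtain E where E: "\<And>s. s \<in> X (N + d) \<Longrightarrow> E s \<in> ?XX \<and> dist (prj p N d s) (E s N) < \<rho>"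
    by metis
  have "uniformly_continuous_on (X (N + d)) (prj p N d)"
    by (rule compact_uniformly_continuous[OF prj_cont cpt])
  then obtain \<epsilon> where \<epsilon>: "\<epsilon> > 0" "\<forall>x\<in>X (N + d). \<forall>x'\<in>X (N + d). dist x' x < \<epsilon> \<longrightarrow> dist (prj p N d x') (prj p N d x) < \<rho>1"
    using \<rho>1(1) unfolding uniformly_continuous_on_def by blast
  obtain k s where k: "k > 0" "s 0 = x (N + d)" "s k = y (N + d)" "\<forall>i\<le>k. s i \<in> X (N + d)"
    "\<forall>i<k. dist (f (N + d) (s i)) (s (Suc i)) \<le> \<epsilon>/2"
    using H[of "\<epsilon>/2" "N + d"] \<epsilon>(1) unfolding chain_to_def by auto
  define e where "e i = (if i = 0 then x else if i = k then y else E (s i))" for i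
  have e_in: "e i \<in> ?XX" if "i \<le> k" for i
    using that x y E k(4) by (auto simp: e_def)
  have e_close: "dist (prj p N d (s i)) (e i N) < \<rho>" if "i \<le> k" for i
  proof -
    have "prj p N d (x (N + d)) = x N" "prj p N d (y (N + d)) = y N"
      using prj_thread[OF x] prj_thread[OF y] by auto
    then show ?thesis using that E k \<rho> by (auto simp: e_def)
  qed
  have step: "prod_dist (induced_map f (e i)) (e (Suc i)) \<le> \<delta>" if i: "i < k" for i
  proof -
    define a where "a = e i N"
    define b where "b = e (Suc i) N"
    define u where "u = prj p N d (s i)"
    define u' where "u' = prj p N d (s (Suc i))"
    have ei: "e i \<in> ?XX" "e (Suc i) \<in> ?XX" using e_in i by auto
    have si: "s i \<in> X (N + d)" "s (Suc i) \<in> X (N + d)" using k(4) i by auto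
    have aX: "a \<in> X N" and bX: "b \<in> X N" using ei by (auto simp: a_def b_def inv_limit_def)
    have uX: "u \<in> X N" and u'X: "u' \<in> X N" using prj_in si by (auto simp: u_def u'_def)
    have faX: "f N a \<in> X N" and fuX: "f N u \<in> X N" using aX uX fin by auto
    have fsi: "f (N + d) (s i) \<in> X (N + d)" using si fin by auto
    have d1: "dist (f N u) u' < \<rho>1"
    proof -
      have "f N u = prj p N d (f (N + d) (s i))" unfolding u_def using prj_equiv[OF si(1)] .
      moreover have "dist (f (N + d) (s i)) (s (Suc i)) < \<epsilon>" using k(5) i \<epsilon>(1) by force
      ultimately show ?thesis using \<epsilon>(2) fsi si(2) by (simp add: u'_def)
    qed
    have d2: "dist (f N a) (f N u) < \<rho>1"
    proof -
      have "dist a u < \<rho>" using e_close[of i] i by (simp add: a_def u_def dist_commute)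
      then have "dist a u < \<rho>2" by (simp add: \<rho>_def)
      then show ?thesis using \<rho>2(2) aX uX by blast
    qed
    have d3: "dist u' b < \<rho>1"
      using e_close[of "Suc i"] i by (simp add: b_def u'_def \<rho>_def)
    have coord: "dist (induced_map f (e i) n) (e (Suc i) n) < \<theta>" if n: "n < N" for n
    proof -
      have "e i n = ?G n a" "e (Suc i) n = ?G n b"
        using prj_thread'[OF ei(1), of n N] prj_thread'[OF ei(2), of n N] n by (auto simp: a_def b_def)
      moreover have "f n (?G n a) = ?G n (f N a)" using prj_equiv'[of n N a] n aX by simp
      ultimately have eq: "dist (induced_map f (e i) n) (e (Suc i) n) = dist (?G n (f N a)) (?G n b)"
        by (simp add: induced_map_def)
      have "dist (?G n (f N a)) (?G n b) \<le> dist (?G n (f N a)) (?G n (f N u)) + dist (?G n (f N u)) (?G n b)"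
        by (rule dist_triangle)
      also have "dist (?G n (f N u)) (?G n b) \<le> dist (?G n (f N u)) (?G n u') + dist (?G n u') (?G n b)"
        by (rule dist_triangle)
      finally have tri: "dist (?G n (f N a)) (?G n b) \<le> dist (?G n (f N a)) (?G n (f N u)) + (dist (?G n (f N u)) (?G n u') + dist (?G n u') (?G n b))"
        by simp
      have t1: "dist (?G n (f N a)) (?G n (f N u)) < \<theta>/3" using \<rho>1(2) n faX fuX d2 by blast
      have t2: "dist (?G n (f N u)) (?G n u') < \<theta>/3" using \<rho>1(2) n fuX u'X d1 by blast
      have t3: "dist (?G n u') (?G n b) < \<theta>/3" using \<rho>1(2) n u'X bX d3 by blast
      show ?thesis using eq tri t1 t2 t3 by linarith
    qed
    have "(\<Sum>n<N. dist (induced_map f (e i) n) (e (Suc i) n)) \<le> (\<Sum>n<N. \<theta>)"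
      by (rule sum_mono) (use coord in \<open>auto intro: less_imp_le\<close>)
    also have "\<dots> = \<delta>/2" using Npos by (simp add: \<theta>_def)
    finally have "(\<Sum>n<N. dist (induced_map f (e i) n) (e (Suc i) n)) \<le> \<delta>/2" .
    then show ?thesis using pd_bound[of "induced_map f (e i)" "e (Suc i)" N] halfN by linarith
  qed
  have "e 0 = x" "e k = y" using k(1) by (auto simp: e_def)
  then show ?thesis unfolding chain_to_def using k(1) e_in step
    by (intro exI[of _ k] conjI exI[of _ e]) auto
qed

end



context invsys
begin

lemma CR_iff:
  "x \<in> chain_recurrent prod_dist (inv_limit X p) (induced_map f) \<longleftrightarrow>
     x \<in> inv_limit X p \<and> (\<forall>n. x n \<in> chain_recurrent dist (X n) (f n))"
proof
  assume A: "x \<in> chain_recurrent prod_dist (inv_limit X p) (induced_map f)"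
  have xX: "x \<in> inv_limit X p" and xx: "\<And>\<delta>. \<delta> > 0 \<Longrightarrow> chain_to prod_dist (inv_limit X p) (induced_map f) \<delta> x x"
    using A unfolding chain_recurrent_def by simp_all
  have "x n \<in> chain_recurrent dist (X n) (f n)" for n
  proof -
    have "x n \<in> X n" using xX by (simp add: inv_limit_def)
    then show ?thesis unfolding chain_recurrent_def using chain_proj_all[OF xx] by simp
  qed
  then show "x \<in> inv_limit X p \<and> (\<forall>n. x n \<in> chain_recurrent dist (X n) (f n))" using xX by simp
next
  assume A: "x \<in> inv_limit X p \<and> (\<forall>n. x n \<in> chain_recurrent dist (X n) (f n))"
  have xX: "x \<in> inv_limit X p" using A by simp
  have xx: "chain_to dist (X n) (f n) \<epsilon> (x n) (x n)" if "\<epsilon> > 0" for n \<epsilon>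
    using A that unfolding chain_recurrent_def by simp
  show "x \<in> chain_recurrent prod_dist (inv_limit X p) (induced_map f)"
    unfolding chain_recurrent_def using xX chain_lift[OF xX xX xx] by simp
qed

lemma CE_iff:
  "chain_equiv prod_dist (inv_limit X p) (induced_map f) x y \<longleftrightarrow>
     x \<in> inv_limit X p \<and> y \<in> inv_limit X p \<and> (\<forall>n. chain_equiv dist (X n) (f n) (x n) (y n))"
proof
  assume A: "chain_equiv prod_dist (inv_limit X p) (induced_map f) x y"
  have xCR: "x \<in> chain_recurrent prod_dist (inv_limit X p) (induced_map f)"
    and yCR: "y \<in> chain_recurrent prod_dist (inv_limit X p) (induced_map f)"
    using A unfolding chain_equiv_def by simp_all
  have xc: "x \<in> inv_limit X p" "\<And>n. x n \<in> chain_recurrent dist (X n) (f n)"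
    using xCR unfolding CR_iff[of x] by simp_all
  have yc: "y \<in> inv_limit X p" "\<And>n. y n \<in> chain_recurrent dist (X n) (f n)"
    using yCR unfolding CR_iff[of y] by simp_all
  have ab: "\<And>\<delta>. \<delta> > 0 \<Longrightarrow> chain_to prod_dist (inv_limit X p) (induced_map f) \<delta> x y"
    and ba: "\<And>\<delta>. \<delta> > 0 \<Longrightarrow> chain_to prod_dist (inv_limit X p) (induced_map f) \<delta> y x"
    using A unfolding chain_equiv_def by simp_all
  have "chain_equiv dist (X n) (f n) (x n) (y n)" for n
    unfolding chain_equiv_def
    using xc(2)[of n] yc(2)[of n] chain_proj_all[OF ab] chain_proj_all[OF ba] by simp
  then show "x \<in> inv_limit X p \<and> y \<in> inv_limit X p \<and> (\<forall>n. chain_equiv dist (X n) (f n) (x n) (y n))"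
    using xc(1) yc(1) by simp
next
  assume A: "x \<in> inv_limit X p \<and> y \<in> inv_limit X p \<and> (\<forall>n. chain_equiv dist (X n) (f n) (x n) (y n))"
  have xX: "x \<in> inv_limit X p" and yX: "y \<in> inv_limit X p"
    and E: "\<And>n. chain_equiv dist (X n) (f n) (x n) (y n)" using A by simp_all
  have "x n \<in> chain_recurrent dist (X n) (f n)" "y n \<in> chain_recurrent dist (X n) (f n)" for n
    using chain_equiv_CR[OF E[of n]] by simp_all
  then have xCR: "x \<in> chain_recurrent prod_dist (inv_limit X p) (induced_map f)"
    and yCR: "y \<in> chain_recurrent prod_dist (inv_limit X p) (induced_map f)"
    unfolding CR_iff using xX yX by simp_all
  have ab: "chain_to dist (X n) (f n) \<epsilon> (x n) (y n)" and ba: "chain_to dist (X n) (f n) \<epsilon> (y n) (x n)"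
    if "\<epsilon> > 0" for n \<epsilon>
    using E[of n] that unfolding chain_equiv_def by simp_all
  have "chain_to prod_dist (inv_limit X p) (induced_map f) \<delta> x y"
     "chain_to prod_dist (inv_limit X p) (induced_map f) \<delta> y x" if "\<delta> > 0" for \<delta>
    using chain_lift[OF xX yX ab that] chain_lift[OF yX xX ba that] by simp_all
  then show "chain_equiv prod_dist (inv_limit X p) (induced_map f) x y"
    unfolding chain_equiv_def using xCR yCR by simp
qed

lemma comp_rep:
  assumes "C \<in> chain_components dist (X n) (f n)"
  obtains c where "c \<in> chain_recurrent dist (X n) (f n)" "C = {z. chain_equiv dist (X n) (f n) c z}"
  using assms unfolding chain_components_def by blast

lemma thread_nonempty:
  assumes C: "C \<in> compatible_components X f p"
  shows "\<exists>w. w \<in> thread_set X p C"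
proof -
  have "\<forall>n. \<exists>c. c \<in> chain_recurrent dist (X n) (f n) \<and> C n = {z. chain_equiv dist (X n) (f n) c z}"
  proof
    fix n
    have "C n \<in> chain_components dist (X n) (f n)" using C unfolding compatible_components_def by blast
    then obtain c where "c \<in> chain_recurrent dist (X n) (f n)" "C n = {z. chain_equiv dist (X n) (f n) c z}"
      by (rule comp_rep)
    then show "\<exists>c. c \<in> chain_recurrent dist (X n) (f n) \<and> C n = {z. chain_equiv dist (X n) (f n) c z}" by blast
  qed
  from choice[OF this] obtain c where c': "\<forall>n. c n \<in> chain_recurrent dist (X n) (f n) \<and> C n = {z. chain_equiv dist (X n) (f n) (c n) z}"
    by blast
  have c: "\<And>n. c n \<in> chain_recurrent dist (X n) (f n)"
    "\<And>n. C n = {z. chain_equiv dist (X n) (f n) (c n) z}" using c' by auto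
  have c_in: "c n \<in> C n" for n using c(2)[of n] chain_equiv_refl[OF c(1)[of n]] by simp
  have CX: "z \<in> X n" if "z \<in> C n" for z n
  proof -
    have "chain_equiv dist (X n) (f n) (c n) z" using c(2)[of n] that by simp
    then have "z \<in> chain_recurrent dist (X n) (f n)" using chain_equiv_CR by metis
    then show ?thesis unfolding chain_recurrent_def by simp
  qed
  have img: "p n a \<in> C n" if "a \<in> C (Suc n)" for a n
  proof -
    have "p n ` C (Suc n) \<subseteq> C n" using C by (simp add: compatible_components_def)
    then show ?thesis using that by (meson image_subset_iff)
  qed
  have prjC: "a \<in> C (j + d) \<Longrightarrow> prj p j d a \<in> C j" for a j d
  proof (induction d arbitrary: j)
    case 0 then show ?case by simp
  next
    case (Suc d)
    have "prj p (Suc j) d a \<in> C (Suc j)" using Suc by simp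
    then show ?case using img by simp
  qed
  define z where "z m j = (if j \<le> m then prj p j (m - j) (c m) else c j)" for m j
  have zC: "z m j \<in> C j" for m j
  proof (cases "j \<le> m")
    case True
    then have "c m \<in> C (j + (m - j))" using c_in[of m] by simp
    then show ?thesis using prjC True by (simp add: z_def)
  next
    case False
    then show ?thesis using c_in[of j] by (simp add: z_def)
  qed
  have zX: "z m j \<in> X j" for m j using zC CX by blast
  have ev: "eventually (\<lambda>m. p j (z m (Suc j)) = z m j) sequentially" for j
  proof (rule eventually_sequentiallyI[of "Suc j"])
    fix m assume "Suc j \<le> m"
    then show "p j (z m (Suc j)) = z m j" unfolding z_def using prj_step by simp
  qed
  obtain r w where w: "w \<in> inv_limit X p" and wl: "\<And>j. (\<lambda>m. z (r m) j) \<longlonglongrightarrow> w j"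
    using thread_limit[OF zX ev] by blast
  have "w j \<in> C j" for j
  proof -
    have "chain_equiv dist (X j) (f j) (c j) (w j)"
    proof (rule CE_closed[OF cpt fcont _ wl])
      show "chain_equiv dist (X j) (f j) (c j) (z (r m) j)" for m using zC[of "r m" j] c(2)[of j] by blast
    qed
    then show ?thesis using c(2) by blast
  qed
  then show ?thesis using w unfolding thread_set_def by blast
qed

lemma main:
  "chain_components prod_dist (inv_limit X p) (induced_map f) =
     {thread_set X p C | C. C \<in> compatible_components X f p}"
proof (intro equalityI subsetI)
  fix K assume "K \<in> chain_components prod_dist (inv_limit X p) (induced_map f)"
  then obtain y where y: "y \<in> chain_recurrent prod_dist (inv_limit X p) (induced_map f)"
    and K: "K = {z. chain_equiv prod_dist (inv_limit X p) (induced_map f) y z}"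
    unfolding chain_components_def by blast
  have yX: "y \<in> inv_limit X p" and yCR: "\<And>n. y n \<in> chain_recurrent dist (X n) (f n)"
    using y CR_iff by blast+
  define C where "C n = {z. chain_equiv dist (X n) (f n) (y n) z}" for n
  have "C \<in> compatible_components X f p"
    unfolding compatible_components_def
  proof (intro CollectI conjI allI)
    fix n
    show "C n \<in> chain_components dist (X n) (f n)"
      unfolding chain_components_def C_def using yCR by blast
    show "p n ` C (Suc n) \<subseteq> C n"
    proof
      fix q assume "q \<in> p n ` C (Suc n)"
      then obtain b where b: "b \<in> C (Suc n)" "q = p n b" by blast
      have "chain_equiv dist (X n) (f n) (p n (y (Suc n))) (p n b)"
        using CE_p b(1) by (simp add: C_def)
      moreover have "p n (y (Suc n)) = y n" using yX by (simp add: inv_limit_def)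
      ultimately show "q \<in> C n" using b by (simp add: C_def)
    qed
  qed
  moreover have "z \<in> thread_set X p C \<longleftrightarrow> z \<in> K" for z
  proof -
    have "z \<in> thread_set X p C \<longleftrightarrow> z \<in> inv_limit X p \<and> (\<forall>n. chain_equiv dist (X n) (f n) (y n) (z n))"
      unfolding thread_set_def C_def by simp
    also have "\<dots> \<longleftrightarrow> chain_equiv prod_dist (inv_limit X p) (induced_map f) y z"
      using CE_iff[of y z] yX by simp
    finally show ?thesis using K by simp
  qed
  then have "thread_set X p C = K" by blast
  ultimately show "K \<in> {thread_set X p C | C. C \<in> compatible_components X f p}" by blast
next
  fix K assume "K \<in> {thread_set X p C | C. C \<in> compatible_components X f p}"
  then obtain C where C: "C \<in> compatible_components X f p" and K: "K = thread_set X p C" by blast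
  obtain w where w: "w \<in> thread_set X p C" using thread_nonempty[OF C] by blast
  have wX: "w \<in> inv_limit X p" and wC: "\<And>n. w n \<in> C n" using w unfolding thread_set_def by auto
  have Cw: "C n = {z. chain_equiv dist (X n) (f n) (w n) z}" for n
  proof -
    have "C n \<in> chain_components dist (X n) (f n)" using C unfolding compatible_components_def by blast
    then obtain c where c: "C n = {z. chain_equiv dist (X n) (f n) c z}" by (rule comp_rep)
    then have cw: "chain_equiv dist (X n) (f n) c (w n)" using wC[of n] by blast
    show ?thesis unfolding c using cw chain_equiv_sym chain_equiv_trans by metis
  qed
  have "w n \<in> chain_recurrent dist (X n) (f n)" for n
  proof -
    have "chain_equiv dist (X n) (f n) (w n) (w n)" using wC[of n] Cw[of n] by simp
    then show ?thesis using chain_equiv_CR by metis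
  qed
  then have wCR: "w \<in> chain_recurrent prod_dist (inv_limit X p) (induced_map f)"
    using CR_iff wX by simp
  have "z \<in> K \<longleftrightarrow> chain_equiv prod_dist (inv_limit X p) (induced_map f) w z" for z
  proof -
    have "z \<in> K \<longleftrightarrow> z \<in> inv_limit X p \<and> (\<forall>n. z n \<in> C n)" unfolding K thread_set_def by simp
    also have "\<dots> \<longleftrightarrow> z \<in> inv_limit X p \<and> (\<forall>n. chain_equiv dist (X n) (f n) (w n) (z n))"
      using Cw by simp
    also have "\<dots> \<longleftrightarrow> chain_equiv prod_dist (inv_limit X p) (induced_map f) w z"
      using CE_iff[of w z] wX by simp
    finally show ?thesis .
  qed
  then have "K = {z. chain_equiv prod_dist (inv_limit X p) (induced_map f) w z}" by blast
  then show "K \<in> chain_components prod_dist (inv_limit X p) (induced_map f)"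
    unfolding chain_components_def using wCR by blast
qed

end


theorem lemma3p2:
  fixes X :: "nat \<Rightarrow> 'a::metric_space set"
    and f p :: "nat \<Rightarrow> 'a \<Rightarrow> 'a"
  assumes "\<And>n. compact (X n)"
    and "\<And>n. continuous_on (X n) (f n)"
    and "\<And>n. f n ` X n \<subseteq> X n"
    and "\<And>n. continuous_on (X (Suc n)) (p n)"
    and "\<And>n. p n ` X (Suc n) \<subseteq> X n"
    and "\<And>n x. x \<in> X (Suc n) \<Longrightarrow> f n (p n x) = p n (f (Suc n) x)"
  shows "chain_components prod_dist (inv_limit X p) (induced_map f) =
         {thread_set X p C | C. C \<in> compatible_components X f p}"
proof -
  interpret invsys X f p
    by (rule invsys.intro) (fact assms)+
  show ?thesis by (rule main)
qed

end
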